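(* Let $\alpha,\beta,\sigma$ be real numbers with $0<\beta<1$, $3\beta\le\alpha<2+\beta$, and $0<\sigma<\frac{2+\beta-\alpha}{2}$. Let $\phi_n:\mathbb{R}\to\mathbb{R}$ ($n\ge0$) be measurable functions with $|\phi_n(s)|\le\sigma|s|$ for all $s\in\mathbb{R}$. Consider the difference equation in $C[0,1]$ (real continuous functions on $[0,1]$): $$x_{n+1}(r)=\frac{\alpha r}{r+1}x_n(r)+\frac{\beta(\beta-\alpha r)}{(r+1)^2}x_{n-1}(r)+\int_0^r\phi_n\Big(x_n(s)-\frac{\beta}{s+1}x_{n-1}(s)\Big)\,ds,\quad r\in[0,1],\ n\ge0.$$ Then for every pair of initial functions $x_0,x_{-1}\in C[0,1]$, the resulting sequence $\{x_n\}$ converges uniformly on $[0,1]$ to the zero function.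
   Context: $C[0,1]$ is the real Banach algebra of continuous real functions on $[0,1]$ with pointwise operations and the sup norm. *)

theory Defs
  imports "HOL-Analysis.Analysis"
begin

end

theory Submission
  imports Defs
begin

lemma int_bound:
  fixes f :: "real \<Rightarrow> real"
  assumes "0 \<le> r" "0 \<le> C" "\<And>s. s \<in> {0..r} \<Longrightarrow> \<bar>f s\<bar> \<le> C"
  shows "\<bar>LINT s:{0..r}|lborel. f s\<bar> \<le> C * r"
proof -
  have "\<bar>LINT s:{0..r}|lborel. f s\<bar> \<le> (LINT s|lborel. \<bar>indicator {0..r} s *\<^sub>R f s\<bar>)"
    unfolding set_lebesgue_integral_def by (rule integral_abs_bound)
  also have "\<dots> \<le> (LINT s|lborel. indicator {0..r} s * C)"
  proof (rule integral_mono')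
    have "integrable lborel (\<lambda>s::real. indicator {0..r} s *\<^sub>R C)" using assms(1) by (intro integrable_indicator) (auto simp: emeasure_lborel_Icc)
    then show "integrable lborel (\<lambda>s. indicator {0..r} s * C)" by simp
  qed (use assms in \<open>auto simp: indicator_def\<close>)
  also have "\<dots> = C * r" using assms(1) by simp
  finally show ?thesis .
qed
lemma bnd: "(\<lambda>n. real (Suc n) * g ^ n) \<longlonglongrightarrow> 0" if "0 \<le> g" "g < 1" for g :: real
proof -
  have "(\<lambda>n. real n * g ^ n + g ^ n) \<longlonglongrightarrow> 0 + 0"
    by (intro tendsto_add powser_times_n_limit_0 LIMSEQ_realpow_zero) (use that in auto)
  then show ?thesis by (simp add: algebra_simps)
qed

lemma cont_bound:
  fixes f :: "real \<Rightarrow> real"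
  assumes "continuous_on {0..1} f"
  shows "\<exists>B>0. \<forall>r\<in>{0..1}. \<bar>f r\<bar> \<le> B"
proof -
  have "bounded (f ` {0..1})"
    by (intro compact_imp_bounded compact_continuous_image assms) auto
  then show ?thesis unfolding bounded_pos by auto
qed

lemma alg: fixes a b r A B I d :: real assumes "d \<noteq> 0"
  shows "a * r / d * A + b * (b - a * r) / d^2 * B + I - b / d * A
       = (a * r - b) / d * (A - b / d * B) + I"
  using assms by (simp add: field_simps power2_eq_square)

theorem mainTheorem9:
  fixes \<alpha> \<beta> \<sigma> :: real
    and \<phi> :: "nat \<Rightarrow> real \<Rightarrow> real"
    and x :: "nat \<Rightarrow> real \<Rightarrow> real"
  assumes "0 < \<beta>" "\<beta> < 1" "3 * \<beta> \<le> \<alpha>" "\<alpha> < 2 + \<beta>"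
    and "0 < \<sigma>" "\<sigma> < (2 + \<beta> - \<alpha>) / 2"
    and "\<And>n. \<phi> n \<in> borel_measurable borel"
    and "\<And>n s. \<bar>\<phi> n s\<bar> \<le> \<sigma> * \<bar>s\<bar>"
    and "continuous_on {0..1} (x 0)" and "continuous_on {0..1} (x 1)"
    and "\<And>n r. r \<in> {0..1} \<Longrightarrow>
      x (n + 2) r = \<alpha> * r / (r + 1) * x (n + 1) r
                  + \<beta> * (\<beta> - \<alpha> * r) / (r + 1)^2 * x n r
                  + (LINT s:{0..r}|lborel. \<phi> n (x (n + 1) s - \<beta> / (s + 1) * x n s))"
  shows "uniform_limit {0..1} x (\<lambda>_. 0) sequentially"
proof -
  define q where "q = (\<alpha> - \<beta>) / 2"
  define \<rho> where "\<rho> = q + \<sigma>"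
  have q0: "\<beta> \<le> q" using assms(3) unfolding q_def by simp
  have \<rho>0: "0 < \<rho>" "\<rho> < 1" using assms(1,3,5,6) q0 unfolding \<rho>_def q_def by (auto simp: field_simps)
  define y where "y n r = x (Suc n) r - \<beta> / (r + 1) * x n r" for n r
  define I where "I n r = (LINT s:{0..r}|lborel. \<phi> n (y n s))" for n r
  have lam2: "\<bar>(\<alpha> * r - \<beta>) / (r + 1)\<bar> \<le> q" if "r \<in> {0..1}" for r
  proof -
    have r: "0 \<le> r" "r \<le> 1" using that by auto
    have h1: "(\<alpha> + \<beta>) * r \<le> \<alpha> + \<beta>" using r assms(1,3) by (intro mult_left_le) auto
    have h2: "0 \<le> (3 * \<alpha> - \<beta>) * r" using r assms(1,3) by auto
    have "\<alpha> * r - \<beta> \<le> q * (r + 1)" unfolding q_def using h1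
      by (simp add: algebra_simps)
    moreover have "\<beta> - \<alpha> * r \<le> q * (r + 1)" unfolding q_def using h2 assms(3)
      by (simp add: algebra_simps)
    ultimately show ?thesis using r by (simp add: abs_le_iff divide_le_eq le_divide_eq)
  qed
  have rec: "y (Suc n) r = (\<alpha> * r - \<beta>) / (r + 1) * y n r + I n r" if "r \<in> {0..1}" for n r
  proof -
    have r1: "r + 1 \<noteq> 0" "1 + r \<noteq> 0" "1 + (r * r + r * 2) \<noteq> 0" using that
      by (auto simp: add_nonneg_eq_0_iff)
    have e: "x (Suc (Suc n)) r = \<alpha> * r / (r + 1) * x (Suc n) r
                  + \<beta> * (\<beta> - \<alpha> * r) / (r + 1)^2 * x n r + I n r"
      using assms(11)[OF that, of n] unfolding I_def y_def by (simp add: numeral_2_eq_2)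
    show ?thesis unfolding y_def[of "Suc n"] e unfolding y_def
      by (rule alg) (use r1 in simp)
  qed
  obtain M0 where M0: "M0 > 0" "\<And>r. r \<in> {0..1} \<Longrightarrow> \<bar>y 0 r\<bar> \<le> M0"
  proof -
    have "continuous_on {0..1} (y 0)" unfolding y_def
      using assms(9,10) by (auto intro!: continuous_intros)
    then show ?thesis using cont_bound that by blast
  qed
  obtain B0 where B0: "B0 > 0" "\<And>r. r \<in> {0..1} \<Longrightarrow> \<bar>x 0 r\<bar> \<le> B0"
    using cont_bound[OF assms(9)] by blast
  have Y: "\<forall>r\<in>{0..1}. \<bar>y n r\<bar> \<le> M0 * \<rho> ^ n" for n
  proof (induction n)
    case 0 then show ?case using M0 by simp
  next
    case (Suc n)
    show ?case
    proof
      fix r :: real assume r: "r \<in> {0..1}"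
      have Ib: "\<bar>I n r\<bar> \<le> (\<sigma> * (M0 * \<rho> ^ n)) * r" unfolding I_def
      proof (rule int_bound)
        show "0 \<le> r" using r by auto
        show "0 \<le> \<sigma> * (M0 * \<rho> ^ n)" using assms(5) M0 \<rho>0 by auto
        fix s assume s: "s \<in> {0..r}"
        then have "s \<in> {0..1}" using r by auto
        then have "\<bar>y n s\<bar> \<le> M0 * \<rho> ^ n" using Suc by auto
        then show "\<bar>\<phi> n (y n s)\<bar> \<le> \<sigma> * (M0 * \<rho> ^ n)"
          using assms(8)[of n "y n s"] assms(5) by (meson mult_left_mono less_imp_le order_trans)
      qed
      have "\<sigma> * (M0 * \<rho> ^ n) * r \<le> \<sigma> * (M0 * \<rho> ^ n)"
        using r assms(5) M0 \<rho>0 by (auto intro!: mult_left_le)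
      have "\<bar>(\<alpha> * r - \<beta>) / (r + 1) * y n r\<bar> \<le> q * (M0 * \<rho> ^ n)"
        unfolding abs_mult using lam2[OF r] Suc r q0 assms(1)
        by (intro mult_mono) auto
      moreover have "\<bar>y (Suc n) r\<bar> \<le> \<bar>(\<alpha> * r - \<beta>) / (r + 1) * y n r\<bar> + \<bar>I n r\<bar>"
        unfolding rec[OF r, of n] by (rule abs_triangle_ineq)
      ultimately have "\<bar>y (Suc n) r\<bar> \<le> q * (M0 * \<rho> ^ n) + \<sigma> * (M0 * \<rho> ^ n)"
        using  Ib \<open>\<sigma> * (M0 * \<rho> ^ n) * r \<le> \<sigma> * (M0 * \<rho> ^ n)\<close> by linarith
      then show "\<bar>y (Suc n) r\<bar> \<le> M0 * \<rho> ^ Suc n" unfolding \<rho>_def by (simp add: algebra_simps)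
    qed
  qed
  define \<gamma> where "\<gamma> = max \<beta> \<rho>"
  have \<gamma>0: "0 < \<gamma>" "\<gamma> < 1" "\<beta> \<le> \<gamma>" "\<rho> \<le> \<gamma>" using assms(1,2) \<rho>0 unfolding \<gamma>_def by auto
  define C where "C = max B0 (M0 / \<gamma>)"
  have C0: "0 \<le> C" "B0 \<le> C" "M0 / \<gamma> \<le> C" using B0 unfolding C_def by auto
  have X: "\<forall>r\<in>{0..1}. \<bar>x n r\<bar> \<le> C * real (Suc n) * \<gamma> ^ n" for n
  proof (induction n)
    case 0
    show ?case
    proof
      fix r :: real assume "r \<in> {0..1}"
      then have "\<bar>x 0 r\<bar> \<le> B0" by (rule B0(2))
      then show "\<bar>x 0 r\<bar> \<le> C * real (Suc 0) * \<gamma> ^ 0" using C0(2) by simp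
    qed
  next
    case (Suc n)
    show ?case
    proof
      fix r :: real assume r: "r \<in> {0..1}"
      have xe: "x (Suc n) r = \<beta> / (r + 1) * x n r + y n r" unfolding y_def by simp
      have l1: "\<bar>\<beta> / (r + 1)\<bar> \<le> \<gamma>"
      proof -
        have rp: "0 < r + 1" using r by auto
        have "\<beta> \<le> \<beta> * (r + 1)" using r assms(1) by (simp add: algebra_simps)
        then have "\<beta> / (r + 1) \<le> \<beta>" using pos_divide_le_eq[OF rp] by blast
        moreover have "0 \<le> \<beta> / (r + 1)" using rp assms(1) by simp
        ultimately show ?thesis using \<gamma>0(3) by linarith
      qed
      have a: "\<bar>\<beta> / (r + 1) * x n r\<bar> \<le> \<gamma> * (C * real (Suc n) * \<gamma> ^ n)"
      proof -
        have "\<bar>x n r\<bar> \<le> C * real (Suc n) * \<gamma> ^ n" using Suc r by blast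
        then have "\<bar>\<beta> / (r + 1)\<bar> * \<bar>x n r\<bar> \<le> \<gamma> * (C * real (Suc n) * \<gamma> ^ n)"
          by (rule mult_mono[OF l1]) (use \<gamma>0 in auto)
        then show ?thesis by (simp only: abs_mult)
      qed
      have "M0 * \<rho> ^ n \<le> M0 * \<gamma> ^ n" using M0 \<rho>0 \<gamma>0
        by (intro mult_left_mono power_mono) auto
      also have "\<dots> = (M0 / \<gamma>) * \<gamma> ^ Suc n" using \<gamma>0 by simp
      also have "\<dots> \<le> C * \<gamma> ^ Suc n" using C0 \<gamma>0 by (intro mult_right_mono) auto
      finally have b0: "M0 * \<rho> ^ n \<le> C * \<gamma> ^ Suc n" .
      have "\<bar>y n r\<bar> \<le> M0 * \<rho> ^ n" using Y[of n] r by blast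
      with b0 have b: "\<bar>y n r\<bar> \<le> C * \<gamma> ^ Suc n" by linarith
      have "\<bar>x (Suc n) r\<bar> \<le> \<gamma> * (C * real (Suc n) * \<gamma> ^ n) + C * \<gamma> ^ Suc n"
        unfolding xe using a b abs_triangle_ineq[of "\<beta> / (r + 1) * x n r" "y n r"] by linarith
      also have "\<dots> = C * real (Suc (Suc n)) * \<gamma> ^ Suc n" by (simp add: algebra_simps)
      finally show "\<bar>x (Suc n) r\<bar> \<le> C * real (Suc (Suc n)) * \<gamma> ^ Suc n" .
    qed
  qed
  have lim: "(\<lambda>n. C * (real (Suc n) * \<gamma> ^ n)) \<longlonglongrightarrow> C * 0"
    by (intro tendsto_mult_left bnd) (use \<gamma>0 in auto)
  show ?thesis
  proof (rule uniform_limitI)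
    fix e :: real assume e: "e > 0"
    have "\<forall>\<^sub>F n in sequentially. C * (real (Suc n) * \<gamma> ^ n) < e"
      using order_tendstoD(2)[OF lim] e by simp
    then show "\<forall>\<^sub>F n in sequentially. \<forall>r\<in>{0..1}. dist (x n r) 0 < e"
    proof (rule eventually_mono)
      fix n assume "C * (real (Suc n) * \<gamma> ^ n) < e"
      then have lt: "C * real (Suc n) * \<gamma> ^ n < e" by (simp only: mult.assoc)
      show "\<forall>r\<in>{0..1}. dist (x n r) 0 < e"
      proof
        fix r :: real assume "r \<in> {0..1}"
        then have "\<bar>x n r\<bar> \<le> C * real (Suc n) * \<gamma> ^ n" using X[of n] by blast
        then show "dist (x n r) 0 < e" using lt unfolding dist_real_def by simp
      qed
    qed
  qed
qed

end
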